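(* Let $\varrho$ be a state on $\mathcal H_A\otimes\mathcal H_B\otimes\mathcal H_C$ with $\mathcal H_A=\mathcal H_B$, and let $F_{AB}$ be the flip operator exchanging $A$ and $B$. If $F_{AB}\,\mathrm{Tr}_C(\varrho)=\pm\mathrm{Tr}_C(\varrho)$, then $(F_{AB}\otimes\mathbb 1_C)\varrho=\pm\varrho$ (with the same sign).
   Context: $F_{AB}=\sum_{i,j}|ij\rangle\langle ji|$ on $\mathcal H_A\otimes\mathcal H_B$ (finite-dimensional Hilbert spaces). *)

theory Defs
  imports "HOL-Analysis.Analysis" "HOL-Library.Complex_Order"
begin

text \<open>Finite-dimensional Hilbert spaces are modelled as \<open>complex ^ 'i\<close> for a finite
  index type \<open>'i\<close> (an orthonormal basis); operators are matrices \<open>complex ^ 'i ^ 'i\<close>.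
  The system ABC has basis index \<open>('a \<times> 'a) \<times> 'c\<close>, with H_A = H_B = \<open>complex ^ 'a\<close>.\<close>

definition positive_semidef :: "complex ^ 'n ^ 'n \<Rightarrow> bool" where
  "positive_semidef M \<longleftrightarrow>
     (\<forall>v :: complex ^ 'n. 0 \<le> (\<Sum>i\<in>UNIV. \<Sum>j\<in>UNIV. cnj (v $ i) * M $ i $ j * v $ j))"

definition mtrace :: "complex ^ 'n ^ 'n \<Rightarrow> complex" where
  "mtrace M = (\<Sum>i\<in>UNIV. M $ i $ i)"

definition is_state :: "complex ^ 'n ^ 'n \<Rightarrow> bool" where
  "is_state M \<longleftrightarrow> positive_semidef M \<and> mtrace M = 1"

definition flip :: "complex ^ ('a::finite \<times> 'a) ^ ('a \<times> 'a)" where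
  "flip = (\<chi> x y. if fst x = snd y \<and> snd x = fst y then 1 else 0)"

definition tensor_op :: "complex ^ 'm::finite ^ 'm \<Rightarrow> complex ^ 'n::finite ^ 'n \<Rightarrow> complex ^ ('m \<times> 'n) ^ ('m \<times> 'n)" where
  "tensor_op A B = (\<chi> x y. A $ fst x $ fst y * B $ snd x $ snd y)"

definition ptrace2 :: "complex ^ ('m::finite \<times> 'n::finite) ^ ('m \<times> 'n) \<Rightarrow> complex ^ 'm ^ 'm" where
  "ptrace2 M = (\<chi> x y. \<Sum>k\<in>UNIV. M $ (x, k) $ (y, k))"

end

theory Submission
  imports Defs
begin

lemma real_quad:
  fixes A C :: real
  assumes h: "\<And>r::real. 0 \<le> r * A + r^2 * C"
  shows "A = 0"
proof -
  have 1: "0 \<le> A + C" using h[of 1] by simp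
  have 2: "0 \<le> - A + C" using h[of "-1"] by simp
  show ?thesis
  proof (cases "C = 0")
    case True then show ?thesis using 1 2 by simp
  next
    case False
    then have Cp: "C > 0" using 1 2 by simp
    have "0 \<le> (-A/(2*C)) * A + (-A/(2*C))^2 * C" by (rule h)
    also have "\<dots> = -((A^2) / (4*C))" using Cp by (simp add: field_simps power2_eq_square)
    finally have "A^2 \<le> 0" using Cp by (simp add: divide_le_0_iff)
    then show ?thesis by simp
  qed
qed

lemma complex_quad:
  fixes a c :: complex
  assumes h: "\<And>r::real. 0 \<le> of_real r * a + of_real (r^2) * c"
  shows "a = 0"
proof -
  have i1: "Im a + Im c = 0" using h[of 1] by (simp add: less_eq_complex_def)
  have i2: "- Im a + Im c = 0" using h[of "-1"] by (simp add: less_eq_complex_def)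
  have "\<And>r. 0 \<le> r * Re a + r^2 * Re c" using h by (simp add: less_eq_complex_def)
  then have "Re a = 0" by (rule real_quad)
  with i1 i2 show ?thesis by (simp add: complex_eq_iff)
qed

definition qf :: "complex ^ 'n ^ 'n \<Rightarrow> complex ^ 'n \<Rightarrow> complex ^ 'n \<Rightarrow> complex" where
  "qf M v w = (\<Sum>i\<in>UNIV. \<Sum>j\<in>UNIV. cnj (v $ i) * M $ i $ j * w $ j)"

lemma qf_expand:
  "qf M (v + t *s w) (v + t *s w) = qf M v v + t * qf M v w + cnj t * qf M w v + cnj t * t * qf M w w"
  unfolding qf_def
  by (simp add: algebra_simps sum.distrib sum_distrib_left)

lemma psd_kernel:
  assumes psd: "positive_semidef M" and z: "qf M v v = 0"
  shows "qf M v w = 0"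
proof -
  have psd': "\<And>u. 0 \<le> qf M u u" using psd unfolding positive_semidef_def qf_def by blast
  define a where "a = qf M v w"
  define b where "b = qf M w v"
  define c where "c = qf M w w"
  have e1: "\<And>r::real. 0 \<le> of_real r * (a + b) + of_real (r^2) * c"
  proof -
    fix r :: real
    have "0 \<le> qf M (v + of_real r *s w) (v + of_real r *s w)" by (rule psd')
    then show "0 \<le> of_real r * (a + b) + of_real (r^2) * c"
      unfolding qf_expand a_def b_def c_def using z by (simp add: algebra_simps power2_eq_square)
  qed
  have e2: "\<And>r::real. 0 \<le> of_real r * (\<i> * (a - b)) + of_real (r^2) * c"
  proof -
    fix r :: real
    have "0 \<le> qf M (v + (\<i> * of_real r) *s w) (v + (\<i> * of_real r) *s w)" by (rule psd')
    then show "0 \<le> of_real r * (\<i> * (a - b)) + of_real (r^2) * c"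
      unfolding qf_expand a_def b_def c_def using z by (simp add: algebra_simps power2_eq_square)
  qed
  have "a + b = 0" using e1 by (rule complex_quad)
  moreover have "\<i> * (a - b) = 0" using e2 by (rule complex_quad)
  ultimately show ?thesis unfolding a_def by (simp add: algebra_simps)
qed


definition sw :: "('a \<times> 'a) \<times> 'c \<Rightarrow> ('a \<times> 'a) \<times> 'c" where
  "sw x = ((snd (fst x), fst (fst x)), snd x)"

lemma sw_sw[simp]: "sw (sw x) = x" by (simp add: sw_def)
lemma sw_eq: "(y = sw x) = (x = sw y)" by (auto simp: sw_def)

lemma G_entry:
  fixes x y :: "('a::finite \<times> 'a) \<times> 'c::finite"
  shows "(tensor_op flip (mat 1 :: complex ^ 'c ^ 'c)) $ x $ y =
     (if y = sw x then 1 else 0 :: complex)"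
  by (cases x; cases y) (auto simp: tensor_op_def flip_def mat_def sw_def)

lemma sum_delta_sw: fixes x :: "('a::finite \<times> 'a) \<times> 'c::finite" shows "(\<Sum>i\<in>UNIV. (if i = sw x then 1 else 0) * f i) = (f (sw x) :: complex)"
proof -
  have "(\<Sum>i\<in>UNIV. (if i = sw x then 1 else 0) * f i) = (\<Sum>i\<in>UNIV. if i = sw x then f (sw x) else 0)"
    by (rule sum.cong) auto
  then show ?thesis by (simp add: sum.delta)
qed

lemma sum_delta_sw2: fixes x :: "('a::finite \<times> 'a) \<times> 'c::finite" shows "(\<Sum>i\<in>UNIV. f i * (if i = sw x then 1 else 0)) = (f (sw x) :: complex)"
  using sum_delta_sw[of x f] by (simp add: mult.commute)


lemma sum_delta_l: fixes x :: "'n::finite"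
  shows "(\<Sum>z\<in>UNIV. (if x = z then 1 else 0) * f z) = (f x :: complex)"
proof -
  have "(\<Sum>z\<in>UNIV. (if x = z then 1 else 0) * f z) = (\<Sum>z\<in>UNIV. if z = x then f x else 0)"
    by (rule sum.cong) auto
  then show ?thesis by simp
qed

lemma sum_pair_UNIV:
  "(\<Sum>x\<in>(UNIV :: ('p::finite \<times> 'k::finite) set). f x) = (\<Sum>p\<in>UNIV. \<Sum>k\<in>UNIV. f (p, k))"
  unfolding sum.cartesian_product UNIV_Times_UNIV by simp

theorem mainTheorem5:
  fixes rho :: "complex ^ (('a::finite \<times> 'a) \<times> 'c::finite) ^ (('a \<times> 'a) \<times> 'c)"
    and s :: real
  assumes "is_state rho"
    and "s = 1 \<or> s = -1"
    and "flip ** ptrace2 rho = s *\<^sub>R ptrace2 rho"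
  shows "tensor_op flip (mat 1 :: complex ^ 'c ^ 'c) ** rho = s *\<^sub>R rho"
proof -
  have psd: "positive_semidef rho" and tr1: "mtrace rho = 1"
    using assms(1) unfolding is_state_def by auto
  define s' where "s' = complex_of_real s"
  have ss: "s' * s' = 1" using assms(2) unfolding s'_def by auto
  define dd :: "('a \<times> 'a) \<times> 'c \<Rightarrow> ('a \<times> 'a) \<times> 'c \<Rightarrow> complex"
    where "dd x y = (if x = y then 1 else 0)" for x y
  define ee :: "('a \<times> 'a) \<times> 'c \<Rightarrow> ('a \<times> 'a) \<times> 'c \<Rightarrow> complex"
    where "ee x y = (if y = sw x then 1 else 0)" for x y
  define Q :: "complex ^ (('a \<times> 'a) \<times> 'c) ^ (('a \<times> 'a) \<times> 'c)"
    where "Q = (\<chi> x y. (dd x y - s' * ee x y) / 2)"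
  have Qe: "Q $ x $ y = (dd x y - s' * ee x y) / 2" for x y
    unfolding Q_def by simp
  have ee_sym: "ee x y = ee y x" for x y unfolding ee_def by (auto simp: sw_def)
  have dd_sym: "dd x y = dd y x" for x y unfolding dd_def by auto
  have Qherm: "cnj (Q $ i $ x) = Q $ x $ i" for i x
    unfolding Qe s'_def using ee_sym[of i x] dd_sym[of i x]
    by (simp add: dd_def ee_def split: if_splits)
  have p1: "(\<Sum>z\<in>UNIV. dd x z * dd z y) = dd x y" for x y
  proof -
    have "(\<Sum>z\<in>UNIV. dd x z * dd z y) = (\<Sum>z\<in>UNIV. (if x = z then 1 else 0) * dd z y)"
      by (simp only: dd_def[of x])
    also have "\<dots> = dd x y" by (rule sum_delta_l)
    finally show ?thesis .
  qed
  have p2: "(\<Sum>z\<in>UNIV. dd x z * ee z y) = ee x y" for x y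
  proof -
    have "(\<Sum>z\<in>UNIV. dd x z * ee z y) = (\<Sum>z\<in>UNIV. (if x = z then 1 else 0) * ee z y)"
      by (simp only: dd_def[of x])
    also have "\<dots> = ee x y" by (rule sum_delta_l)
    finally show ?thesis .
  qed
  have p3: "(\<Sum>z\<in>UNIV. ee x z * dd z y) = ee x y" for x y
  proof -
    have "(\<Sum>z\<in>UNIV. ee x z * dd z y) = (\<Sum>z\<in>UNIV. (if z = sw x then 1 else 0) * dd z y)"
      by (simp only: ee_def[of x])
    also have "\<dots> = dd (sw x) y" by (rule sum_delta_sw)
    also have "\<dots> = ee x y" unfolding dd_def ee_def by auto
    finally show ?thesis .
  qed
  have p4: "(\<Sum>z\<in>UNIV. ee x z * ee z y) = dd x y" for x y
  proof -
    have "(\<Sum>z\<in>UNIV. ee x z * ee z y) = (\<Sum>z\<in>UNIV. (if z = sw x then 1 else 0) * ee z y)"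
      by (simp only: ee_def[of x])
    also have "\<dots> = ee (sw x) y" by (rule sum_delta_sw)
    also have "\<dots> = dd x y" unfolding dd_def ee_def by auto
    finally show ?thesis .
  qed
  have QQ: "(\<Sum>z\<in>UNIV. Q $ x $ z * Q $ z $ y) = Q $ x $ y" for x y
  proof -
    have pw: "Q $ x $ z * Q $ z $ y = (dd x z * dd z y - s' * (dd x z * ee z y)
        - s' * (ee x z * dd z y) + (s' * s') * (ee x z * ee z y)) / 4" for z
      unfolding Qe by (simp add: field_simps)
    have "(\<Sum>z\<in>UNIV. Q $ x $ z * Q $ z $ y) =
      ((\<Sum>z\<in>UNIV. dd x z * dd z y) - s' * (\<Sum>z\<in>UNIV. dd x z * ee z y)
        - s' * (\<Sum>z\<in>UNIV. ee x z * dd z y) + (s' * s') * (\<Sum>z\<in>UNIV. ee x z * ee z y)) / 4"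
      unfolding pw sum_divide_distrib[symmetric] sum.distrib sum_subtractf sum_distrib_left ..
    also have "\<dots> = Q $ x $ y" unfolding p1 p2 p3 p4 ss Qe by (simp add: field_simps)
    finally show ?thesis .
  qed
  have fl: "flip $ p $ q = (if (snd p, fst p) = q then 1 else 0)" for p q :: "'a \<times> 'a"
    unfolding flip_def by (cases p; cases q) auto
  have h3: "(\<Sum>x\<in>UNIV. rho $ (sw x) $ x) = s'"
  proof -
    have "mtrace (flip ** ptrace2 rho) = mtrace (s *\<^sub>R ptrace2 rho)" using assms(3) by simp
    moreover have "mtrace (flip ** ptrace2 rho) = (\<Sum>x\<in>UNIV. rho $ (sw x) $ x)"
    proof -
      have "mtrace (flip ** ptrace2 rho) =
          (\<Sum>p\<in>UNIV. \<Sum>q\<in>UNIV. flip $ p $ q * ptrace2 rho $ q $ p)"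
        unfolding mtrace_def matrix_matrix_mult_def by simp
      also have "\<dots> = (\<Sum>p\<in>UNIV. ptrace2 rho $ (snd p, fst p) $ p)"
        by (simp only: fl sum_delta_l)
      also have "\<dots> = (\<Sum>p\<in>UNIV. \<Sum>k\<in>UNIV. rho $ ((snd p, fst p), k) $ (p, k))"
        unfolding ptrace2_def by simp
      also have "\<dots> = (\<Sum>x\<in>UNIV. rho $ (sw x) $ x)"
        by (simp add: sum_pair_UNIV sw_def)
      finally show ?thesis .
    qed
    moreover have "mtrace (s *\<^sub>R ptrace2 rho) = s' * mtrace rho"
    proof -
      have "mtrace (s *\<^sub>R ptrace2 rho) = (\<Sum>p\<in>UNIV. s' * (\<Sum>k\<in>UNIV. rho $ (p, k) $ (p, k)))"
        unfolding mtrace_def ptrace2_def s'_def vector_scaleR_component vec_lambda_beta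
        by (simp only: scaleR_conv_of_real)
      also have "\<dots> = s' * mtrace rho"
        unfolding mtrace_def sum_pair_UNIV sum_distrib_left ..
      finally show ?thesis .
    qed
    ultimately show ?thesis using tr1 by simp
  qed
  have h4: "(\<Sum>i\<in>UNIV. \<Sum>j\<in>UNIV. rho $ i $ j * Q $ j $ i) = 0"
  proof -
    have a: "(\<Sum>i\<in>UNIV. \<Sum>j\<in>UNIV. rho $ i $ j * dd j i) = 1"
    proof -
      have "(\<Sum>i\<in>UNIV. \<Sum>j\<in>UNIV. rho $ i $ j * dd j i) = (\<Sum>i\<in>UNIV. \<Sum>j\<in>UNIV. (if i = j then 1 else 0) * rho $ i $ j)"
        by (intro sum.cong refl) (simp add: dd_def)
      also have "\<dots> = (\<Sum>i\<in>UNIV. rho $ i $ i)" by (simp only: sum_delta_l)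
      finally show ?thesis using tr1 unfolding mtrace_def by simp
    qed
    have b0: "(\<Sum>i\<in>UNIV. \<Sum>j\<in>UNIV. rho $ i $ j * ee j i) = (\<Sum>i\<in>UNIV. rho $ i $ (sw i))"
    proof -
      have "(\<Sum>i\<in>UNIV. \<Sum>j\<in>UNIV. rho $ i $ j * ee j i) = (\<Sum>i\<in>UNIV. \<Sum>j\<in>UNIV. (if j = sw i then 1 else 0) * rho $ i $ j)"
        by (intro sum.cong refl) (auto simp: ee_def sw_def)
      also have "\<dots> = (\<Sum>i\<in>UNIV. rho $ i $ (sw i))" by (simp only: sum_delta_sw)
      finally show ?thesis .
    qed
    have b1: "(\<Sum>i\<in>UNIV. rho $ i $ (sw i)) = (\<Sum>x\<in>UNIV. rho $ (sw x) $ x)"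
      by (rule sum.reindex_bij_witness[of _ sw sw]) auto
    have pw: "rho $ i $ j * Q $ j $ i = (rho $ i $ j * dd j i - s' * (rho $ i $ j * ee j i)) / 2" for i j
      unfolding Qe by (simp add: field_simps)
    have "(\<Sum>i\<in>UNIV. \<Sum>j\<in>UNIV. rho $ i $ j * Q $ j $ i) =
       ((\<Sum>i\<in>UNIV. \<Sum>j\<in>UNIV. rho $ i $ j * dd j i) - s' * (\<Sum>i\<in>UNIV. \<Sum>j\<in>UNIV. rho $ i $ j * ee j i)) / 2"
      unfolding pw sum_divide_distrib[symmetric] sum_subtractf sum_distrib_left ..
    also have "\<dots> = 0" unfolding a b0 b1 h3 ss by simp
    finally show ?thesis .
  qed
  define col where "col x = (\<chi> i. Q $ i $ x)" for x
  have h5: "(\<Sum>x\<in>UNIV. qf rho (col x) (col x)) = 0"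
  proof -
    have "(\<Sum>x\<in>UNIV. qf rho (col x) (col x)) =
        (\<Sum>x\<in>UNIV. \<Sum>i\<in>UNIV. \<Sum>j\<in>UNIV. rho $ i $ j * (Q $ j $ x * Q $ x $ i))"
      unfolding qf_def col_def by (intro sum.cong refl) (simp add: Qherm mult_ac)
    also have "\<dots> = (\<Sum>i\<in>UNIV. \<Sum>x\<in>UNIV. \<Sum>j\<in>UNIV. rho $ i $ j * (Q $ j $ x * Q $ x $ i))"
      by (rule sum.swap)
    also have "\<dots> = (\<Sum>i\<in>UNIV. \<Sum>j\<in>UNIV. \<Sum>x\<in>UNIV. rho $ i $ j * (Q $ j $ x * Q $ x $ i))"
      by (intro sum.cong refl sum.swap)
    also have "\<dots> = (\<Sum>i\<in>UNIV. \<Sum>j\<in>UNIV. rho $ i $ j * Q $ j $ i)"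
      by (simp only: sum_distrib_left[symmetric] QQ)
    finally show ?thesis using h4 by simp
  qed
  have nn: "\<And>x. 0 \<le> qf rho (col x) (col x)"
    using psd unfolding positive_semidef_def qf_def by blast
  have h6all: "\<forall>x\<in>UNIV. qf rho (col x) (col x) = 0"
  proof -
    have "((\<Sum>x\<in>UNIV. qf rho (col x) (col x)) = 0) = (\<forall>x\<in>UNIV. qf rho (col x) (col x) = 0)"
      by (rule sum_nonneg_eq_0_iff) (simp_all add: nn)
    then show ?thesis using h5 by blast
  qed
  have h6: "qf rho (col x) (col x) = 0" for x
    using h6all by blast
  have h7: "(\<Sum>i\<in>UNIV. Q $ x $ i * rho $ i $ y) = 0" for x y
  proof -
    have "qf rho (col x) (axis y 1) = 0" by (rule psd_kernel[OF psd h6])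
    moreover have "qf rho (col x) (axis y 1) = (\<Sum>i\<in>UNIV. Q $ x $ i * rho $ i $ y)"
    proof -
      have "qf rho (col x) (axis y 1) = (\<Sum>i\<in>UNIV. \<Sum>j\<in>UNIV. (Q $ x $ i * rho $ i $ j) * (if y = j then 1 else 0))"
        unfolding qf_def col_def axis_def by (intro sum.cong refl) (simp add: Qherm)
      also have "\<dots> = (\<Sum>i\<in>UNIV. Q $ x $ i * rho $ i $ y)"
        by (simp only: mult.commute[of _ "if _ then _ else _"] sum_delta_l)
      finally show ?thesis .
    qed
    ultimately show ?thesis by simp
  qed
  have h8: "rho $ (sw x) $ y = s' * rho $ x $ y" for x y
  proof -
    have pw: "Q $ x $ i * rho $ i $ y = (dd x i * rho $ i $ y - s' * ((if i = sw x then 1 else 0) * rho $ i $ y)) / 2" for i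
      unfolding Qe ee_def by (simp add: field_simps)
    have "(\<Sum>i\<in>UNIV. Q $ x $ i * rho $ i $ y) =
        ((\<Sum>i\<in>UNIV. dd x i * rho $ i $ y) - s' * (\<Sum>i\<in>UNIV. (if i = sw x then 1 else 0) * rho $ i $ y)) / 2"
      unfolding pw sum_divide_distrib[symmetric] sum_subtractf sum_distrib_left ..
    also have "\<dots> = (rho $ x $ y - s' * rho $ (sw x) $ y) / 2"
      unfolding dd_def sum_delta_sw sum_delta_l ..
    finally have "rho $ x $ y = s' * rho $ (sw x) $ y" using h7[of x y] by simp
    then have "s' * rho $ x $ y = (s' * s') * rho $ (sw x) $ y" by simp
    then show ?thesis using ss by simp
  qed
  show ?thesis
  proof (intro iffD2[OF vec_eq_iff] allI)
    fix x y
    have "(tensor_op flip (mat 1 :: complex ^ 'c ^ 'c) ** rho) $ x $ y = rho $ (sw x) $ y"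
      unfolding matrix_matrix_mult_def G_entry by (simp add: sum_delta_sw)
    also have "\<dots> = (s *\<^sub>R rho) $ x $ y" unfolding h8 s'_def vector_scaleR_component by (simp only: scaleR_conv_of_real)
    finally show "(tensor_op flip (mat 1 :: complex ^ 'c ^ 'c) ** rho) $ x $ y = (s *\<^sub>R rho) $ x $ y" .
  qed
qed

end
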